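(* An element $a\in C\ell_{1,2}$ is invertible (i.e. there exists $b\in C\ell_{1,2}$ with $ab=ba=1$) if and only if $P(a)\neq 0$, and in this case $$a^{-1}=\frac{N(a)-2T(a)e_7}{P(a)}\,\bar a.$$
   Context: $C\ell_{1,2}$ is the real Clifford algebra generated by $i_1,i_2,i_3$ with $i_1^2=1$, $i_2^2=i_3^2=-1$ and $i_ti_m=-i_mi_t$ for $t\neq m$, with real basis $e_0=1$, $e_1=i_1$, $e_2=i_2$, $e_3=i_1i_2$, $e_4=i_3$, $e_5=i_1i_3$, $e_6=i_2i_3$, $e_7=i_1i_2i_3$. For $a=\sum_{t=0}^7 a_te_t$ define $\bar a=a_0-a_1e_1-a_2e_2-a_3e_3-a_4e_4-a_5e_5-a_6e_6+a_7e_7$, $N(a)=a_0^2-a_1^2+a_2^2-a_3^2+a_4^2-a_5^2+a_6^2-a_7^2$, $T(a)=a_0a_7+a_2a_5-a_1a_6-a_3a_4$, $P(a)=N(a)^2+4T(a)^2$. *)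

theory Defs
  imports Complex_Main
begin

text \<open>Elements of the real Clifford algebra Cl(1,2): real coordinates with respect to
  the basis e_0,...,e_7.  The basis index t, written in binary, records which generators
  occur: bit 0 = i_1, bit 1 = i_2, bit 2 = i_3 (so e_3 = i_1 i_2, e_5 = i_1 i_3,
  e_6 = i_2 i_3, e_7 = i_1 i_2 i_3), in increasing order of generators.\<close>

datatype cl12 = Cl real real real real real real real real

fun coef :: "cl12 \<Rightarrow> nat \<Rightarrow> real" where
  "coef (Cl a0 a1 a2 a3 a4 a5 a6 a7) t =
     (if t = 0 then a0 else if t = 1 then a1 else if t = 2 then a2 else if t = 3 then a3
      else if t = 4 then a4 else if t = 5 then a5 else if t = 6 then a6
      else if t = 7 then a7 else 0)"

definition mk :: "(nat \<Rightarrow> real) \<Rightarrow> cl12" where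
  "mk f = Cl (f 0) (f 1) (f 2) (f 3) (f 4) (f 5) (f 6) (f 7)"

definition gen_sq :: "nat \<Rightarrow> real" where
  "gen_sq p = (if p = 0 then 1 else -1)"

text \<open>Sign in e_i e_j = blade_sign i j * e_(i xor j): reorder using anticommutation
  (one sign per pair of generator p in e_i and q in e_j with q < p) and then contract
  the repeated generators using their squares.\<close>
definition blade_sign :: "nat \<Rightarrow> nat \<Rightarrow> real" where
  "blade_sign i j =
     (-1) ^ card {(p, q). p < 3 \<and> q < 3 \<and> bit i p \<and> bit j q \<and> q < p}
     * (\<Prod>p\<in>{p. p < 3 \<and> bit i p \<and> bit j p}. gen_sq p)"

definition basis :: "nat \<Rightarrow> cl12" where
  "basis t = mk (\<lambda>k. if k = t then 1 else 0)"

definition cl_one :: cl12 where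
  "cl_one = basis 0"

definition cl_mult :: "cl12 \<Rightarrow> cl12 \<Rightarrow> cl12" where
  "cl_mult a b = mk (\<lambda>k. \<Sum>i<8. \<Sum>j<8.
      (if xor i j = k then blade_sign i j * coef a i * coef b j else 0))"

definition cl_add :: "cl12 \<Rightarrow> cl12 \<Rightarrow> cl12" where
  "cl_add a b = mk (\<lambda>k. coef a k + coef b k)"

definition cl_scale :: "real \<Rightarrow> cl12 \<Rightarrow> cl12" where
  "cl_scale r a = mk (\<lambda>k. r * coef a k)"

definition cl_conj :: "cl12 \<Rightarrow> cl12" where
  "cl_conj a = mk (\<lambda>t. if t = 0 \<or> t = 7 then coef a t else - coef a t)"

definition cl_N :: "cl12 \<Rightarrow> real" where
  "cl_N a = (coef a 0)^2 - (coef a 1)^2 + (coef a 2)^2 - (coef a 3)^2 + (coef a 4)^2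
            - (coef a 5)^2 + (coef a 6)^2 - (coef a 7)^2"

definition cl_T :: "cl12 \<Rightarrow> real" where
  "cl_T a = coef a 0 * coef a 7 + coef a 2 * coef a 5 - coef a 1 * coef a 6 - coef a 3 * coef a 4"

definition cl_P :: "cl12 \<Rightarrow> real" where
  "cl_P a = (cl_N a)^2 + 4 * (cl_T a)^2"

end

theory Submission imports Defs begin
lemma bs_alt: "blade_sign i j = (\<Prod>p<3. \<Prod>q<3. if bit i p \<and> bit j q \<and> q < p then -1 else 1) * (\<Prod>p<3. if bit i p \<and> bit j p then gen_sq p else 1)"
proof -
  have f: "finite ({..<3::nat} \<times> {..<3::nat})" by simp
  have "{(p, q). p < 3 \<and> q < 3 \<and> bit i p \<and> bit j q \<and> q < p} = {x \<in> {..<3::nat} \<times> {..<3::nat}. case x of (p,q) \<Rightarrow> bit i p \<and> bit j q \<and> q < p}" by auto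
  hence "((-1::real) ^ card {(p, q). p < 3 \<and> q < 3 \<and> bit i p \<and> bit j q \<and> q < p}) = (\<Prod>x\<in>{x \<in> {..<3::nat} \<times> {..<3::nat}. case x of (p,q) \<Rightarrow> bit i p \<and> bit j q \<and> q < p}. -1)"
    by simp
  also have "\<dots> = (\<Prod>x\<in>{..<3::nat} \<times> {..<3::nat}. if (case x of (p,q) \<Rightarrow> bit i p \<and> bit j q \<and> q < p) then -1 else 1)"
    by (rule prod.inter_filter[OF f])
  also have "\<dots> = (\<Prod>p<3. \<Prod>q<3. if bit i p \<and> bit j q \<and> q < p then -1 else 1)"
    by (subst prod.cartesian_product) (simp add: split_def)
  finally have 1: "((-1::real) ^ card {(p, q). p < 3 \<and> q < 3 \<and> bit i p \<and> bit j q \<and> q < p}) = (\<Prod>p<3. \<Prod>q<3. if bit i p \<and> bit j q \<and> q < p then -1 else 1)" .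
  have S: "{p. p < 3 \<and> bit i p \<and> bit j p} = {p \<in> {..<3::nat}. bit i p \<and> bit j p}" by auto
  have 2: "(\<Prod>p\<in>{p. p < 3 \<and> bit i p \<and> bit j p}. gen_sq p) = (\<Prod>p<3. if bit i p \<and> bit j p then gen_sq p else 1)"
    unfolding S by (rule prod.inter_filter) simp
  show ?thesis unfolding blade_sign_def 1 2 ..
qed

lemma l3: "{..<3::nat} = {0,1,2}" by auto
lemma bs_tab:
  "blade_sign 0 0 = 1"
  "blade_sign 0 1 = 1"
  "blade_sign 0 2 = 1"
  "blade_sign 0 3 = 1"
  "blade_sign 0 4 = 1"
  "blade_sign 0 5 = 1"
  "blade_sign 0 6 = 1"
  "blade_sign 0 7 = 1"
  "blade_sign 1 0 = 1"
  "blade_sign 1 1 = 1"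
  "blade_sign 1 2 = 1"
  "blade_sign 1 3 = 1"
  "blade_sign 1 4 = 1"
  "blade_sign 1 5 = 1"
  "blade_sign 1 6 = 1"
  "blade_sign 1 7 = 1"
  "blade_sign 2 0 = 1"
  "blade_sign 2 1 = -1"
  "blade_sign 2 2 = -1"
  "blade_sign 2 3 = 1"
  "blade_sign 2 4 = 1"
  "blade_sign 2 5 = -1"
  "blade_sign 2 6 = -1"
  "blade_sign 2 7 = 1"
  "blade_sign 3 0 = 1"
  "blade_sign 3 1 = -1"
  "blade_sign 3 2 = -1"
  "blade_sign 3 3 = 1"
  "blade_sign 3 4 = 1"
  "blade_sign 3 5 = -1"
  "blade_sign 3 6 = -1"
  "blade_sign 3 7 = 1"
  "blade_sign 4 0 = 1"
  "blade_sign 4 1 = -1"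
  "blade_sign 4 2 = -1"
  "blade_sign 4 3 = 1"
  "blade_sign 4 4 = -1"
  "blade_sign 4 5 = 1"
  "blade_sign 4 6 = 1"
  "blade_sign 4 7 = -1"
  "blade_sign 5 0 = 1"
  "blade_sign 5 1 = -1"
  "blade_sign 5 2 = -1"
  "blade_sign 5 3 = 1"
  "blade_sign 5 4 = -1"
  "blade_sign 5 5 = 1"
  "blade_sign 5 6 = 1"
  "blade_sign 5 7 = -1"
  "blade_sign 6 0 = 1"
  "blade_sign 6 1 = 1"
  "blade_sign 6 2 = 1"
  "blade_sign 6 3 = 1"
  "blade_sign 6 4 = -1"
  "blade_sign 6 5 = -1"
  "blade_sign 6 6 = -1"
  "blade_sign 6 7 = -1"
  "blade_sign 7 0 = 1"
  "blade_sign 7 1 = 1"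
  "blade_sign 7 2 = 1"
  "blade_sign 7 3 = 1"
  "blade_sign 7 4 = -1"
  "blade_sign 7 5 = -1"
  "blade_sign 7 6 = -1"
  "blade_sign 7 7 = -1"
  "blade_sign 0 (Suc 0) = 1"
  "blade_sign (Suc 0) 0 = 1"
  "blade_sign (Suc 0) (Suc 0) = 1"
  "blade_sign (Suc 0) 2 = 1"
  "blade_sign (Suc 0) 3 = 1"
  "blade_sign (Suc 0) 4 = 1"
  "blade_sign (Suc 0) 5 = 1"
  "blade_sign (Suc 0) 6 = 1"
  "blade_sign (Suc 0) 7 = 1"
  "blade_sign 2 (Suc 0) = -1"
  "blade_sign 3 (Suc 0) = -1"
  "blade_sign 4 (Suc 0) = -1"
  "blade_sign 5 (Suc 0) = -1"
  "blade_sign 6 (Suc 0) = 1"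
  "blade_sign 7 (Suc 0) = 1"
  by (simp_all add: bs_alt l3 gen_sq_def bit_1_iff bit_Suc_0_iff)
lemma l8: "{..<8::nat} = {0,1,2,3,4,5,6,7}" by auto
lemma mult_Cl: "cl_mult (Cl a0 a1 a2 a3 a4 a5 a6 a7) (Cl b0 b1 b2 b3 b4 b5 b6 b7) = Cl (a0 * b0 + a1 * b1 - a2 * b2 + a3 * b3 - a4 * b4 + a5 * b5 - a6 * b6 - a7 * b7) (a0 * b1 + a1 * b0 + a2 * b3 - a3 * b2 + a4 * b5 - a5 * b4 - a6 * b7 - a7 * b6) (a0 * b2 + a1 * b3 + a2 * b0 - a3 * b1 + a4 * b6 - a5 * b7 - a6 * b4 - a7 * b5) (a0 * b3 + a1 * b2 - a2 * b1 + a3 * b0 - a4 * b7 + a5 * b6 - a6 * b5 - a7 * b4) (a0 * b4 + a1 * b5 - a2 * b6 + a3 * b7 + a4 * b0 - a5 * b1 + a6 * b2 + a7 * b3) (a0 * b5 + a1 * b4 + a2 * b7 - a3 * b6 - a4 * b1 + a5 * b0 + a6 * b3 + a7 * b2) (a0 * b6 + a1 * b7 + a2 * b4 - a3 * b5 - a4 * b2 + a5 * b3 + a6 * b0 + a7 * b1) (a0 * b7 + a1 * b6 - a2 * b5 + a3 * b4 + a4 * b3 - a5 * b2 + a6 * b1 + a7 * b0)"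
  by (simp add: cl_mult_def mk_def l8 bs_tab)

lemma mk_Cl: "mk f = Cl (f 0) (f 1) (f 2) (f 3) (f 4) (f 5) (f 6) (f 7)" by (simp add: mk_def)

lemma one_Cl: "cl_one = Cl 1 0 0 0 0 0 0 0" by (simp add: cl_one_def basis_def mk_def)
lemma e7_Cl: "basis 7 = Cl 0 0 0 0 0 0 0 1" by (simp add: basis_def mk_def)
lemma add_Cl: "cl_add (Cl a0 a1 a2 a3 a4 a5 a6 a7) (Cl b0 b1 b2 b3 b4 b5 b6 b7) = Cl (a0+b0) (a1+b1) (a2+b2) (a3+b3) (a4+b4) (a5+b5) (a6+b6) (a7+b7)"
  by (simp add: cl_add_def mk_def)
lemma scale_Cl: "cl_scale r (Cl a0 a1 a2 a3 a4 a5 a6 a7) = Cl (r*a0) (r*a1) (r*a2) (r*a3) (r*a4) (r*a5) (r*a6) (r*a7)"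
  by (simp add: cl_scale_def mk_def)
lemma conj_Cl: "cl_conj (Cl a0 a1 a2 a3 a4 a5 a6 a7) = Cl a0 (-a1) (-a2) (-a3) (-a4) (-a5) (-a6) a7"
  by (simp add: cl_conj_def mk_def)
lemma N_Cl: "cl_N (Cl a0 a1 a2 a3 a4 a5 a6 a7) = a0^2 - a1^2 + a2^2 - a3^2 + a4^2 - a5^2 + a6^2 - a7^2"
  by (simp add: cl_N_def)
lemma T_Cl: "cl_T (Cl a0 a1 a2 a3 a4 a5 a6 a7) = a0*a7 + a2*a5 - a1*a6 - a3*a4"
  by (simp add: cl_T_def)

lemma assoc: "cl_mult (cl_mult x y) z = cl_mult x (cl_mult y z)"
  by (cases x; cases y; cases z) (simp add: mult_Cl algebra_simps)

lemma mult_scale_r: "cl_mult x (cl_scale r y) = cl_scale r (cl_mult x y)"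
  by (cases x; cases y) (simp add: mult_Cl scale_Cl algebra_simps)
lemma mult_scale_l: "cl_mult (cl_scale r x) y = cl_scale r (cl_mult x y)"
  by (cases x; cases y) (simp add: mult_Cl scale_Cl algebra_simps)

lemma a_conj: "cl_mult a (cl_conj a) = Cl (cl_N a) 0 0 0 0 0 0 (2 * cl_T a)"
  by (cases a) (simp add: mult_Cl conj_Cl N_Cl T_Cl algebra_simps power2_eq_square)

definition Dm :: "cl12 \<Rightarrow> cl12" where
  "Dm a = cl_mult (cl_add (cl_scale (cl_N a) cl_one) (cl_scale (- 2 * cl_T a) (basis 7))) (cl_conj a)"

lemma a_D: "cl_mult a (Dm a) = Cl (cl_P a) 0 0 0 0 0 0 0"
  by (cases a) (simp add: Dm_def cl_P_def mult_Cl conj_Cl N_Cl T_Cl one_Cl e7_Cl add_Cl scale_Cl algebra_simps power2_eq_square)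
lemma D_a: "cl_mult (Dm a) a = Cl (cl_P a) 0 0 0 0 0 0 0"
  by (cases a) (simp add: Dm_def cl_P_def mult_Cl conj_Cl N_Cl T_Cl one_Cl e7_Cl add_Cl scale_Cl algebra_simps power2_eq_square)


lemma P0: "cl_P a = 0 \<Longrightarrow> cl_N a = 0 \<and> cl_T a = 0"
  unfolding cl_P_def by (smt (verit) zero_le_power2 power2_eq_square mult_nonneg_nonneg zero_less_power2)

theorem proposition2p7:
  fixes a :: cl12
  shows "((\<exists>b. cl_mult a b = cl_one \<and> cl_mult b a = cl_one) \<longleftrightarrow> cl_P a \<noteq> 0)
    \<and> (cl_P a \<noteq> 0 \<longrightarrow>
        (let inv = cl_mult (cl_scale (1 / cl_P a)
                      (cl_add (cl_scale (cl_N a) cl_one) (cl_scale (- 2 * cl_T a) (basis 7))))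
                    (cl_conj a)
         in cl_mult a inv = cl_one \<and> cl_mult inv a = cl_one
            \<and> (\<forall>b. cl_mult a b = cl_one \<and> cl_mult b a = cl_one \<longrightarrow> b = inv)))"
proof -
  define inv where "inv = cl_mult (cl_scale (1 / cl_P a)
                      (cl_add (cl_scale (cl_N a) cl_one) (cl_scale (- 2 * cl_T a) (basis 7))))
                    (cl_conj a)"
  have inv_eq: "inv = cl_scale (1 / cl_P a) (Dm a)"
    unfolding inv_def Dm_def mult_scale_l ..
  have good: "cl_mult a inv = cl_one \<and> cl_mult inv a = cl_one" if P: "cl_P a \<noteq> 0"
    unfolding inv_eq mult_scale_l mult_scale_r a_D D_a using P by (simp add: scale_Cl one_Cl)
  have uniq: "b = inv" if "cl_mult a b = cl_one" "cl_mult b a = cl_one" "cl_P a \<noteq> 0" for b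
  proof -
    have r1: "cl_mult x cl_one = x" for x by (cases x) (simp add: one_Cl mult_Cl)
    have l1: "cl_mult cl_one x = x" for x by (cases x) (simp add: one_Cl mult_Cl)
    have "b = cl_mult b (cl_mult a inv)" using good[OF that(3)] r1 by simp
    also have "\<dots> = cl_mult (cl_mult b a) inv" by (simp add: assoc)
    also have "\<dots> = inv" using that(2) l1 by simp
    finally show ?thesis .
  qed
  have nec: "cl_P a \<noteq> 0" if "cl_mult a b = cl_one" "cl_mult b a = cl_one" for b
  proof
    assume "cl_P a = 0"
    hence z: "cl_mult a (cl_conj a) = Cl 0 0 0 0 0 0 0 0" using P0 a_conj by simp
    have l1: "cl_mult cl_one x = x" for x by (cases x) (simp add: one_Cl mult_Cl)
    have "cl_conj a = cl_mult (cl_mult b a) (cl_conj a)" using that(2) l1 by simp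
    also have "\<dots> = cl_mult b (Cl 0 0 0 0 0 0 0 0)" by (simp add: assoc z)
    also have "\<dots> = Cl 0 0 0 0 0 0 0 0" by (cases b) (simp add: mult_Cl)
    finally have "a = Cl 0 0 0 0 0 0 0 0" by (cases a) (simp add: conj_Cl)
    hence "cl_mult a b = Cl 0 0 0 0 0 0 0 0" by (cases b) (simp add: mult_Cl)
    thus False using that(1) by (simp add: one_Cl)
  qed
  show ?thesis
    unfolding inv_def[symmetric] Let_def using good uniq nec by blast
qed

end
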